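(* Let $\mathbb{\Lambda}=\{\pm\lambda^n:n\in\mathbb{Z}\}$ with $\lambda$ one of: $\lambda=2$; $\lambda=\sigma$ the plastic number; or $\lambda>1$ with $1=\lambda^b-\lambda^a$ for mutually prime integers $0\le a<b\le 62$, $(a,b)\notin\{(1,3),(4,5)\}$. Let $\ast$ be any non-trivial operation of the following form: for $\lambda\neq\sigma$, $(f\ast g)(k)=c\sum_{(p,q)\in\mathbb{\Lambda}^2,\,p+q=1}f(pk)g(qk)$ with $c\neq0$; for $\lambda=\sigma$, $(f\ast g)(k)=c_1\sum_{(p,q)\in T_1}f(pk)g(qk)+c_2\sum_{(p,q)\in T_2}f(pk)g(qk)$ with $(c_1,c_2)\neq(0,0)$. Then $\ast$ is not associative: the identity $(f\ast g)\ast h=f\ast(g\ast h)$ does not hold for all absolutely summable functions $f,g,h$ on $\mathbb{\Lambda}$.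
   Context: The plastic number $\sigma\approx1.325$ is the unique real root of $x^3-x-1=0$. $T_1=\{(\sigma^3,-\sigma),(-\sigma,\sigma^3),(\sigma^2,-\sigma^{-1}),(-\sigma^{-1},\sigma^2),(\sigma^{-3},\sigma^{-2}),(\sigma^{-2},\sigma^{-3})\}$ and $T_2=\{(\sigma^5,-\sigma^4),(-\sigma^4,\sigma^5),(\sigma,-\sigma^{-4}),(-\sigma^{-4},\sigma),(\sigma^{-5},\sigma^{-1}),(\sigma^{-1},\sigma^{-5})\}$. Functions are $f:\mathbb{\Lambda}\to\mathbb{C}$ with $\sum_k|f(k)|<\infty$. *)

theory Defs
  imports "HOL-Analysis.Analysis"
begin

definition plastic :: real where
  "plastic = (THE x::real. x^3 - x - 1 = 0)"

definition Lam :: "real \<Rightarrow> real set" where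
  "Lam l = {x. \<exists>n::int. x = l powi n \<or> x = - (l powi n)}"

definition gen_op :: "real \<Rightarrow> complex \<Rightarrow> (real \<Rightarrow> complex) \<Rightarrow> (real \<Rightarrow> complex) \<Rightarrow> real \<Rightarrow> complex" where
  "gen_op l c f g k = c * (\<Sum>\<^sub>\<infinity>(p,q)\<in>{(p,q). p \<in> Lam l \<and> q \<in> Lam l \<and> p + q = 1}. f (p*k) * g (q*k))"

definition T1 :: "(real \<times> real) set" where
  "T1 = (let s = plastic in
     {(s powi 3, - s), (- s, s powi 3), (s powi 2, - (s powi (-1))), (- (s powi (-1)), s powi 2),
      (s powi (-3), s powi (-2)), (s powi (-2), s powi (-3))})"

definition T2 :: "(real \<times> real) set" where
  "T2 = (let s = plastic in
     {(s powi 5, - (s powi 4)), (- (s powi 4), s powi 5), (s, - (s powi (-4))), (- (s powi (-4)), s),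
      (s powi (-5), s powi (-1)), (s powi (-1), s powi (-5))})"

definition sigma_op :: "complex \<Rightarrow> complex \<Rightarrow> (real \<Rightarrow> complex) \<Rightarrow> (real \<Rightarrow> complex) \<Rightarrow> real \<Rightarrow> complex" where
  "sigma_op c1 c2 f g k =
     c1 * (\<Sum>(p,q)\<in>T1. f (p*k) * g (q*k)) + c2 * (\<Sum>(p,q)\<in>T2. f (p*k) * g (q*k))"

definition assoc_on :: "real set \<Rightarrow> ((real \<Rightarrow> complex) \<Rightarrow> (real \<Rightarrow> complex) \<Rightarrow> real \<Rightarrow> complex) \<Rightarrow> bool" where
  "assoc_on L oper \<longleftrightarrow> (\<forall>f g h. ((\<lambda>x. norm (f x)) summable_on L) \<longrightarrow> ((\<lambda>x. norm (g x)) summable_on L) \<longrightarrow> ((\<lambda>x. norm (h x)) summable_on L) \<longrightarrow>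
      (\<forall>k\<in>L. oper (oper f g) h k = oper f (oper g h) k))"

end

theory Submission
  imports Defs
begin

definition dlt :: "real \<Rightarrow> real \<Rightarrow> complex" where
  "dlt a x = (if x = a then 1 else 0)"

lemma infsum_single:
  fixes f :: "'a \<Rightarrow> 'b::{comm_monoid_add,t2_space}"
  assumes "\<And>x. x \<in> A \<Longrightarrow> x \<noteq> a \<Longrightarrow> f x = 0"
  shows "infsum f A = (if a \<in> A then f a else 0)"
proof -
  have "infsum f A = infsum f (A \<inter> {a})"
    by (rule infsum_cong_neutral) (use assms in auto)
  then show ?thesis by (cases "a \<in> A") auto
qed

lemma sum_single:
  fixes f :: "'a \<Rightarrow> 'b::{comm_monoid_add,t2_space}"
  assumes "finite A" "\<And>x. x \<in> A \<Longrightarrow> x \<noteq> a \<Longrightarrow> f x = 0"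
  shows "sum f A = (if a \<in> A then f a else 0)"
  using infsum_single[of A a f] assms by simp

lemma dlt_summable: "(\<lambda>x. norm (dlt a x)) summable_on A"
proof -
  have "(\<lambda>x. norm (dlt a x)) summable_on (A \<inter> {a})" by simp
  moreover have "((\<lambda>x. norm (dlt a x)) summable_on A) = ((\<lambda>x. norm (dlt a x)) summable_on (A \<inter> {a}))"
    by (rule summable_on_cong_neutral) (auto simp: dlt_def)
  ultimately show ?thesis by simp
qed

section \<open>General lambda\<close>

lemma gen_zero:
  assumes "v \<noteq> 0"
  shows "gen_op l c (dlt v) (dlt (-v)) x = 0"
proof -
  have "(\<Sum>\<^sub>\<infinity>(p,q)\<in>{(p,q). p \<in> Lam l \<and> q \<in> Lam l \<and> p + q = 1}. dlt v (p*x) * dlt (-v) (q*x)) = 0"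
  proof (rule infsum_0, clarify)
    fix p q :: real assume pq: "p + q = 1"
    show "dlt v (p*x) * dlt (-v) (q*x) = 0"
    proof (rule ccontr)
      assume "dlt v (p*x) * dlt (-v) (q*x) \<noteq> 0"
      then have "p*x = v" "q*x = -v" by (auto simp: dlt_def split: if_splits)
      then have "(p+q)*x = 0" by (simp add: distrib_right)
      then have "x = 0" using pq by simp
      then show False using \<open>p*x = v\<close> assms by simp
    qed
  qed
  then show ?thesis by (simp add: gen_op_def)
qed

lemma gen_pt:
  assumes "u + v \<noteq> 0" "u/(u+v) \<in> Lam l" "v/(u+v) \<in> Lam l"
  shows "gen_op l c (dlt u) (dlt v) (u+v) = c"
proof -
  let ?S = "{(p,q). p \<in> Lam l \<and> q \<in> Lam l \<and> p + q = 1}"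
  have mem: "(u/(u+v), v/(u+v)) \<in> ?S" using assms by (simp add: add_divide_distrib[symmetric])
  have "(\<Sum>\<^sub>\<infinity>(p,q)\<in>?S. dlt u (p*(u+v)) * dlt v (q*(u+v))) = 1"
  proof (subst infsum_single[where a = "(u/(u+v), v/(u+v))"])
    fix x assume "x \<in> ?S" "x \<noteq> (u/(u+v), v/(u+v))"
    then obtain p q where x: "x = (p,q)" and ne: "(p,q) \<noteq> (u/(u+v), v/(u+v))" by (cases x) auto
    have "dlt u (p*(u+v)) * dlt v (q*(u+v)) = 0"
    proof (rule ccontr)
      assume "dlt u (p*(u+v)) * dlt v (q*(u+v)) \<noteq> 0"
      then have "p*(u+v) = u" "q*(u+v) = v" by (auto simp: dlt_def split: if_splits)
      then have "p = u/(u+v)" "q = v/(u+v)" using assms(1) by (auto simp: field_simps)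
      then show False using ne by simp
    qed
    then show "(case x of (p,q) \<Rightarrow> dlt u (p*(u+v)) * dlt v (q*(u+v))) = 0" using x by simp
  next
    show "(if (u/(u+v), v/(u+v)) \<in> ?S then (case (u/(u+v), v/(u+v)) of (p,q) \<Rightarrow> dlt u (p*(u+v)) * dlt v (q*(u+v))) else 0) = 1"
      using mem assms(1) by (simp add: dlt_def)
  qed
  then show ?thesis by (simp add: gen_op_def)
qed

lemma gen_outer:
  assumes "u \<noteq> 0" "(u+v)/u \<in> Lam l" "-v/u \<in> Lam l"
  shows "gen_op l c F (dlt (-v)) u = c * F (u+v)"
proof -
  let ?S = "{(p,q). p \<in> Lam l \<and> q \<in> Lam l \<and> p + q = 1}"
  let ?a = "((u+v)/u, -v/u)"
  have mem: "?a \<in> ?S" using assms by (simp add: field_simps)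
  have "(\<Sum>\<^sub>\<infinity>(p,q)\<in>?S. F (p*u) * dlt (-v) (q*u)) = F (u+v)"
  proof (subst infsum_single[where a = ?a])
    fix x assume "x \<in> ?S" "x \<noteq> ?a"
    then obtain p q where x: "x = (p,q)" and ne: "(p,q) \<noteq> ?a" and pq: "p + q = 1" by (cases x) auto
    have "F (p*u) * dlt (-v) (q*u) = 0"
    proof (rule ccontr)
      assume "F (p*u) * dlt (-v) (q*u) \<noteq> 0"
      then have "q*u = -v" by (auto simp: dlt_def split: if_splits)
      then have "q = -v/u" using assms(1) by (auto simp: field_simps)
      moreover have "p = 1 - q" using pq by simp
      moreover have "p * u = u + v" using \<open>q*u = -v\<close> pq
        by (metis add_diff_cancel_right' diff_minus_eq_add left_diff_distrib' mult_1)
      ultimately have "p = (u+v)/u" "q = -v/u" using assms(1) by (auto simp: field_simps)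
      then show False using ne by simp
    qed
    then show "(case x of (p,q) \<Rightarrow> F (p*u) * dlt (-v) (q*u)) = 0" using x by simp
  next
    show "(if ?a \<in> ?S then (case ?a of (p,q) \<Rightarrow> F (p*u) * dlt (-v) (q*u)) else 0) = F (u+v)"
    proof -
      have "(u+v)/u * u = u + v" using assms(1) by simp
      then show ?thesis using mem assms(1) by (simp add: dlt_def)
    qed
  qed
  then show ?thesis by (simp add: gen_op_def)
qed

lemma gen_nonassoc:
  assumes "c \<noteq> 0" "u \<in> Lam l" "v \<noteq> 0" "u \<noteq> 0" "u + v \<noteq> 0"
    "u/(u+v) \<in> Lam l" "v/(u+v) \<in> Lam l" "(u+v)/u \<in> Lam l" "-v/u \<in> Lam l"
  shows "\<not> assoc_on (Lam l) (gen_op l c)"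
proof
  assume "assoc_on (Lam l) (gen_op l c)"
  then have "gen_op l c (gen_op l c (dlt u) (dlt v)) (dlt (-v)) u = gen_op l c (dlt u) (gen_op l c (dlt v) (dlt (-v))) u"
    using assms(2) dlt_summable unfolding assoc_on_def by blast
  moreover have "gen_op l c (gen_op l c (dlt u) (dlt v)) (dlt (-v)) u = c * c"
    using gen_outer[OF assms(4,8,9)] gen_pt[OF assms(5,6,7)] by simp
  moreover have "gen_op l c (dlt v) (dlt (-v)) = (\<lambda>x. 0)"
    using gen_zero[OF assms(3)] by auto
  moreover have "gen_op l c (dlt u) (\<lambda>x. 0) u = 0"
    by (simp add: gen_op_def infsum_0)
  ultimately show False using assms(1) by simp
qed


section \<open>The plastic number\<close>

lemma cubic_neg:
  fixes x :: real assumes "x \<le> 1" shows "x^3 - x - 1 < 0"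
proof (cases "x \<ge> 0")
  case True
  have "x^2 \<le> 1" using True assms by (simp add: power_le_one)
  then have "x * x^2 \<le> x * 1" using True by (rule mult_left_mono)
  then show ?thesis by (simp add: power3_eq_cube power2_eq_square)
next
  case False
  define y where "y = -x"
  have y: "y > 0" using False y_def by simp
  have "y < 1 + y^3"
  proof (cases "y \<le> 1")
    case True then show ?thesis using y by (smt (verit) zero_less_power)
  next
    case False
    then have "1 < y^2" by (simp add: one_less_power)
    then have "y * 1 < y * y^2" using y by simp
    then show ?thesis by (simp add: power3_eq_cube power2_eq_square)
  qed
  then show ?thesis unfolding y_def by (simp add: power3_eq_cube)
qed

lemma plastic_props: "plastic^3 = plastic + 1 \<and> plastic > 1"
proof -
  have ex: "\<exists>x::real. 1 \<le> x \<and> x \<le> 2 \<and> x^3 - x - 1 = 0"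
    by (rule IVT[of "\<lambda>x::real. x^3 - x - 1"]) (auto intro!: continuous_intros)
  have gt: "x > 1" if "x^3 - x - 1 = 0" for x :: real
    using cubic_neg[of x] that by linarith
  have uniq: "x = y" if "x^3 - x - 1 = 0" "y^3 - y - 1 = 0" for x y :: real
  proof (rule ccontr)
    assume ne: "x \<noteq> y"
    have "(y - x) * (y^2 + x*y + x^2 - 1) = 0" using that by (simp add: algebra_simps power2_eq_square power3_eq_cube)
    then have "y^2 + x*y + x^2 = 1" using ne by simp
    moreover have "x > 1" "y > 1" using gt that by auto
    ultimately show False by (smt (verit) mult_less_cancel_right2 one_less_power power2_eq_square)
  qed
  have "\<exists>!x::real. x^3 - x - 1 = 0" using ex uniq by blast
  then have "plastic^3 - plastic - 1 = 0" unfolding plastic_def by (rule theI')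
  then show ?thesis using gt by auto
qed

abbreviation "sg \<equiv> plastic"

lemma sg_gt1: "sg > 1" and sg_cube: "sg^3 = sg + 1"
  using plastic_props by auto

lemma sg_5: "sg^5 = sg^4 + 1"
proof -
  have "sg^5 - sg^4 - 1 = (sg^2 - sg + 1) * (sg^3 - sg - 1)" by (simp add: algebra_simps power2_eq_square power3_eq_cube power_numeral_reduce)
  then show ?thesis using sg_cube by simp
qed

lemma T1_eq: "T1 = {(sg^3, -sg), (-sg, sg^3), (sg^2, -inverse sg), (-inverse sg, sg^2), (inverse (sg^3), inverse (sg^2)), (inverse (sg^2), inverse (sg^3))}"
  by (simp add: T1_def power_int_minus)
lemma T2_eq: "T2 = {(sg^5, -(sg^4)), (-(sg^4), sg^5), (sg, -inverse (sg^4)), (-inverse (sg^4), sg), (inverse (sg^5), inverse sg), (inverse sg, inverse (sg^5))}"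
  by (simp add: T2_def power_int_minus)

lemma fin_T: "finite T1" "finite T2" by (simp_all add: T1_eq T2_eq)

lemma T_sum1: assumes "(p,q) \<in> T1 \<union> T2" shows "p + q = 1"
proof -
  have s0: "sg \<noteq> 0" using sg_gt1 by simp
  have a0: "sg^2 - inverse sg = (sg^3 - 1)/sg" using s0 by (simp add: field_simps power2_eq_square power3_eq_cube)
  have a: "sg^2 - inverse sg = 1" unfolding a0 using sg_cube s0 by simp
  have b0: "inverse (sg^3) + inverse (sg^2) = (1 + sg)/sg^3" using s0 by (simp add: field_simps power2_eq_square power3_eq_cube)
  have b: "inverse (sg^3) + inverse (sg^2) = 1" unfolding b0 using sg_cube sg_gt1 by simp
  have c0: "sg - inverse (sg^4) = (sg^5 - 1)/sg^4" using s0 by (simp add: field_simps power_numeral_reduce)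
  have c: "sg - inverse (sg^4) = 1" unfolding c0 using sg_5 s0 by simp
  have d0: "inverse (sg^5) + inverse sg = (1 + sg^4)/sg^5" using s0 by (simp add: field_simps power_numeral_reduce)
  have d: "inverse (sg^5) + inverse sg = 1" unfolding d0
  proof -
    have "sg^4 > 0" using sg_gt1 by simp
    then have h: "1 + sg^4 \<noteq> 0" by linarith
    have "(1 + sg^4)/sg^5 = (1 + sg^4)/(1 + sg^4)" using sg_5 by (simp add: add.commute)
    then show "(1 + sg^4)/sg^5 = 1" using h by simp
  qed
  show ?thesis using assms a b c d sg_cube sg_5 unfolding T1_eq T2_eq by auto
qed

lemma sig_zero:
  assumes "v \<noteq> 0"
  shows "sigma_op c1 c2 (dlt v) (dlt (-v)) x = 0"
proof -
  have z: "dlt v (p*x) * dlt (-v) (q*x) = 0" if "(p,q) \<in> T1 \<union> T2" for p q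
  proof (rule ccontr)
    assume "dlt v (p*x) * dlt (-v) (q*x) \<noteq> 0"
    then have "p*x = v" "q*x = -v" by (auto simp: dlt_def split: if_splits)
    then have "(p+q)*x = 0" by (simp add: distrib_right)
    then have "x = 0" using T_sum1[OF that] by simp
    then show False using \<open>p*x = v\<close> assms by simp
  qed
  have "(\<Sum>(p,q)\<in>T1. dlt v (p*x) * dlt (-v) (q*x)) = 0" by (rule sum.neutral) (use z in auto)
  moreover have "(\<Sum>(p,q)\<in>T2. dlt v (p*x) * dlt (-v) (q*x)) = 0" by (rule sum.neutral) (use z in auto)
  ultimately show ?thesis by (simp add: sigma_op_def)
qed

lemma sig_pt_T:
  assumes "finite T"
  shows "(\<Sum>(p,q)\<in>T. dlt u (p*1) * dlt v (q*1)) = (if (u,v) \<in> T then 1 else 0)"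
proof -
  have "(\<Sum>(p,q)\<in>T. dlt u (p*1) * dlt v (q*1)) = (if (u,v) \<in> T then (case (u,v) of (p,q) \<Rightarrow> dlt u (p*1) * dlt v (q*1)) else 0)"
    by (rule sum_single[OF assms]) (auto simp: dlt_def split: if_splits)
  then show ?thesis by (simp add: dlt_def)
qed

lemma sig_pt:
  "sigma_op c1 c2 (dlt u) (dlt v) 1 = c1 * (if (u,v) \<in> T1 then 1 else 0) + c2 * (if (u,v) \<in> T2 then 1 else 0)"
  unfolding sigma_op_def using sig_pt_T[OF fin_T(1)] sig_pt_T[OF fin_T(2)] by simp

lemma sig_outer_T:
  assumes "finite T" "T \<subseteq> T1 \<union> T2" "u \<noteq> 0" "u + v = 1"
  shows "(\<Sum>(p,q)\<in>T. F (p*u) * dlt (-v) (q*u)) = F 1 * (if (1/u, -v/u) \<in> T then 1 else 0)"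
proof -
  let ?a = "(1/u, -v/u)"
  have "(\<Sum>(p,q)\<in>T. F (p*u) * dlt (-v) (q*u)) = (if ?a \<in> T then (case ?a of (p,q) \<Rightarrow> F (p*u) * dlt (-v) (q*u)) else 0)"
  proof (rule sum_single[OF assms(1)])
    fix x assume xT: "x \<in> T" and ne: "x \<noteq> ?a"
    obtain p q where x: "x = (p,q)" by (cases x)
    have pq: "p + q = 1" using T_sum1 xT x assms(2) by auto
    have "F (p*u) * dlt (-v) (q*u) = 0"
    proof (rule ccontr)
      assume "F (p*u) * dlt (-v) (q*u) \<noteq> 0"
      then have qu: "q*u = -v" by (auto simp: dlt_def split: if_splits)
      then have "q = -v/u" using assms(3) by (auto simp: field_simps)
      moreover have "p * u = 1" using qu pq assms(4)
        by (metis add_diff_cancel_right' diff_minus_eq_add left_diff_distrib' mult_1)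
      ultimately have "p = 1/u" "q = -v/u" using assms(3) by (auto simp: field_simps)
      then show False using ne x by simp
    qed
    then show "(case x of (p,q) \<Rightarrow> F (p*u) * dlt (-v) (q*u)) = 0" using x by simp
  qed
  also have "\<dots> = F 1 * (if ?a \<in> T then 1 else 0)"
    using assms(3) by (simp add: dlt_def)
  finally show ?thesis .
qed

lemma sig_outer:
  assumes "u \<noteq> 0" "u + v = 1"
  shows "sigma_op c1 c2 F (dlt (-v)) u = F 1 * (c1 * (if (1/u, -v/u) \<in> T1 then 1 else 0) + c2 * (if (1/u, -v/u) \<in> T2 then 1 else 0))"
  unfolding sigma_op_def
  using sig_outer_T[OF fin_T(1) _ assms, of F] sig_outer_T[OF fin_T(2) _ assms, of F]
  by (simp add: algebra_simps)

lemma sig_nonassoc_gen: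
  assumes "u \<in> Lam sg" "u \<noteq> 0" "v \<noteq> 0" "u + v = 1"
    "(c1 * (if (u,v) \<in> T1 then 1 else 0) + c2 * (if (u,v) \<in> T2 then 1 else 0)) *
     (c1 * (if (1/u, -v/u) \<in> T1 then 1 else 0) + c2 * (if (1/u, -v/u) \<in> T2 then 1 else 0)) \<noteq> 0"
  shows "\<not> assoc_on (Lam sg) (sigma_op c1 c2)"
proof
  assume "assoc_on (Lam sg) (sigma_op c1 c2)"
  then have "sigma_op c1 c2 (sigma_op c1 c2 (dlt u) (dlt v)) (dlt (-v)) u = sigma_op c1 c2 (dlt u) (sigma_op c1 c2 (dlt v) (dlt (-v))) u"
    using assms(1) dlt_summable unfolding assoc_on_def by blast
  moreover have "sigma_op c1 c2 (sigma_op c1 c2 (dlt u) (dlt v)) (dlt (-v)) u \<noteq> 0"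
    using sig_outer[OF assms(2,4)] sig_pt[of c1 c2 u v] assms(5) by simp
  moreover have "sigma_op c1 c2 (dlt v) (dlt (-v)) = (\<lambda>x. 0)"
    using sig_zero[OF assms(3)] by auto
  moreover have "sigma_op c1 c2 (dlt u) (\<lambda>x. 0) u = 0"
    by (simp add: sigma_op_def)
  ultimately show False by simp
qed

lemma Lam_pow: "l powi n \<in> Lam l" "- (l powi n) \<in> Lam l"
  unfolding Lam_def by blast+

lemma sig_nonassoc:
  assumes "(c1, c2) \<noteq> (0, 0)"
  shows "\<not> assoc_on (Lam sg) (sigma_op c1 c2)"
proof -
  have s1: "sg > 1" by (rule sg_gt1)
  have s0: "sg \<noteq> 0" using s1 by simp
  show ?thesis
  proof (cases "c1 = 0")
    case True
    then have c2: "c2 \<noteq> 0" using assms by simp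
    have m1: "(sg^5, -(sg^4)) \<in> T2" by (simp add: T2_eq)
    have e: "(1/sg^5, -(-(sg^4))/sg^5) = (inverse (sg^5), inverse sg)"
      using s0 by (simp add: field_simps power_numeral_reduce)
    have m2: "(1/sg^5, -(-(sg^4))/sg^5) \<in> T2" unfolding e by (simp add: T2_eq)
    show ?thesis
    proof (rule sig_nonassoc_gen[of "sg^5" "-(sg^4)"])
      show "sg^5 \<in> Lam sg" using Lam_pow(1)[of sg 5] by simp
      show "sg^5 + - (sg^4) = 1" using sg_5 by simp
    qed (use s0 m1 m2 True c2 in auto)
  next
    case False
    have m1: "(sg^3, -sg) \<in> T1" by (simp add: T1_eq)
    have e: "(1/sg^3, -(-sg)/sg^3) = (inverse (sg^3), inverse (sg^2))"
      using s0 by (simp add: field_simps power2_eq_square power3_eq_cube)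
    have m2: "(1/sg^3, -(-sg)/sg^3) \<in> T1" unfolding e by (simp add: T1_eq)
    have p1: "sg^3 < sg^5" "sg < sg^4" "sg < sg^3" "sg^2 < sg^3" "sg^3 < sg^4" "sg^2 < sg^5" "1 < sg^2"
      using s1 power_strict_increasing[of 1 3 sg] power_strict_increasing[of 1 4 sg] by (simp_all add: power_strict_increasing)
    have i1: "inverse (sg^5) < inverse (sg^3)" "inverse (sg^4) < inverse (sg^2)"
      "inverse sg > inverse (sg^2)" "inverse sg > inverse (sg^3)"
      using s1 p1 power_strict_increasing[of 1 2 sg] by (auto simp: power_strict_increasing intro!: less_imp_inverse_less)
    have pos: "sg^5 > 0" "sg^4 > 0" "inverse sg > 0" "inverse (sg^5) > 0" "inverse (sg^4) > 0" using s1 by auto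
    have f: "inverse (sg^3) < 1" "1 < sg^5" "inverse (sg^3) > 0" "inverse sg < 1" "inverse (sg^5) < 1"
      using s1 by (simp_all add: inverse_less_1_iff one_less_power)
    have n1: "(sg^3, -sg) \<notin> T2"
    proof
      assume "(sg^3, -sg) \<in> T2"
      then have "sg^3 = sg^5 \<or> sg^3 = -(sg^4) \<or> sg^3 = sg \<or> sg^3 = -inverse (sg^4) \<or> sg^3 = inverse (sg^5) \<or> sg^3 = inverse sg"
        unfolding T2_eq by auto
      then show False using p1 pos f s1 by (elim disjE; linarith)
    qed
    have n2: "(1/sg^3, -(-sg)/sg^3) \<notin> T2"
    proof
      assume "(1/sg^3, -(-sg)/sg^3) \<in> T2"
      then have "(inverse (sg^3), inverse (sg^2)) \<in> T2" using e by simp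
      then have "inverse (sg^3) = sg^5 \<or> inverse (sg^3) = -(sg^4) \<or> inverse (sg^3) = sg \<or> inverse (sg^3) = -inverse (sg^4) \<or> inverse (sg^3) = inverse (sg^5) \<or> inverse (sg^3) = inverse sg"
        unfolding T2_eq by auto
      then show False using p1 pos f s1 i1 by (elim disjE; linarith)
    qed
    show ?thesis
    proof (rule sig_nonassoc_gen[of "sg^3" "-sg"])
      show "sg^3 \<in> Lam sg" using Lam_pow(1)[of sg 3] by simp
      show "sg^3 + - sg = 1" using sg_cube by simp
    qed (use s0 m1 m2 n1 n2 False in auto)
  qed
qed

theorem corollary1:
  fixes l :: real
  assumes "l = 2 \<or> l = plastic \<or>
    (\<exists>a b :: nat. l > 1 \<and> 1 = l ^ b - l ^ a \<and> coprime a b \<and> a < b \<and> b \<le> 62 \<and>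
        (a, b) \<notin> {(1, 3), (4, 5)})"
  shows "(l \<noteq> plastic \<longrightarrow> (\<forall>c::complex. c \<noteq> 0 \<longrightarrow> \<not> assoc_on (Lam l) (gen_op l c))) \<and>
         (l = plastic \<longrightarrow> (\<forall>c1 c2 :: complex. (c1, c2) \<noteq> (0, 0) \<longrightarrow> \<not> assoc_on (Lam l) (sigma_op c1 c2)))"
proof (intro conjI impI allI)
  fix c1 c2 :: complex assume "l = plastic" "(c1, c2) \<noteq> (0, 0)"
  then show "\<not> assoc_on (Lam l) (sigma_op c1 c2)" using sig_nonassoc by simp
next
  fix c :: complex assume lp: "l \<noteq> plastic" and c: "c \<noteq> 0"
  then consider "l = 2" | a b :: nat where "l > 1" "1 = l ^ b - l ^ a" using assms by blast
  then show "\<not> assoc_on (Lam l) (gen_op l c)"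
  proof cases
    case 1
    have h: "(1::real)/2 \<in> Lam l" using Lam_pow(1)[of l "-1"] 1 by (simp add: power_int_minus)
    show ?thesis
    proof (rule gen_nonassoc[of c 1 l 1])
      show "(1::real) \<in> Lam l" using Lam_pow(1)[of l 0] by simp
      show "(1::real)/(1+1) \<in> Lam l" using Lam_pow(1)[of l "-1"] 1 by (simp add: power_int_minus)
      show "((1::real)+1)/1 \<in> Lam l" using Lam_pow(1)[of l 1] 1 by simp
      show "-(1::real)/1 \<in> Lam l" using Lam_pow(2)[of l 0] by simp
    qed (use c h in auto)
  next
    case (2 a b)
    have l0: "l \<noteq> 0" using 2 by simp
    have lb: "1 + l^a = l^b" using 2 by simp
    have pa: "l^a > 0" using 2 by simp
    show ?thesis
    proof (rule gen_nonassoc[of c 1 l "l^a"])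
      show "(1::real) \<in> Lam l" using Lam_pow(1)[of l 0] by simp
      show "1 / (1 + l^a) \<in> Lam l" unfolding lb using Lam_pow(1)[of l "- int b"] by (simp add: power_int_minus_divide)
      show "l^a / (1 + l^a) \<in> Lam l" unfolding lb using Lam_pow(1)[of l "int a - int b"] l0 by (simp add: power_int_diff)
      show "(1 + l^a) / 1 \<in> Lam l" unfolding lb using Lam_pow(1)[of l "int b"] by simp
      show "- (l^a) / 1 \<in> Lam l" using Lam_pow(2)[of l "int a"] by simp
    qed (use c pa l0 in auto)
  qed
qed

end
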